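(* Let $\mathfrak{A}$ be a unital C*-algebra and $\mathsf{L}$ a seminorm on the self-adjoint part $\mathrm{sa}(\mathfrak{A})$ such that $\{a\in\mathrm{sa}(\mathfrak{A}):\mathsf{L}(a)<\infty\}$ is dense in $\mathrm{sa}(\mathfrak{A})$. If $D\in[0,\infty]$ is such that $\mathrm{mk}_{\mathsf{L}}(\mu,\nu)\le D$ for all pure states $\mu,\nu$ of $\mathfrak{A}$, then $\mathrm{mk}_{\mathsf{L}}(\mu,\nu)\le D$ for all states $\mu,\nu$ of $\mathfrak{A}$.
   Context: For states $\varphi,\psi$ of $\mathfrak{A}$, the Monge–Kantorovich metric is $\mathrm{mk}_{\mathsf{L}}(\varphi,\psi)=\sup\{|\varphi(a)-\psi(a)|: a\in\mathrm{sa}(\mathfrak{A}),\ \mathsf{L}(a)\le1\}\in[0,\infty]$. *)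

theory Defs
  imports "HOL-Analysis.Analysis" "HOL-Library.Extended_Nonnegative_Real"
begin

class cstar_algebra = banach + real_normed_algebra_1 +
  fixes scaleC :: "complex \<Rightarrow> 'a \<Rightarrow> 'a"
    and cstar :: "'a \<Rightarrow> 'a"
  assumes scaleC_add_right: "scaleC c (x + y) = scaleC c x + scaleC c y"
    and scaleC_add_left: "scaleC (c + d) x = scaleC c x + scaleC d x"
    and scaleC_scaleC: "scaleC c (scaleC d x) = scaleC (c * d) x"
    and scaleC_one: "scaleC 1 x = x"
    and scaleR_scaleC: "scaleR r x = scaleC (complex_of_real r) x"
    and norm_scaleC: "norm (scaleC c x) = cmod c * norm x"
    and scaleC_mult_left: "scaleC c (x * y) = scaleC c x * y"
    and scaleC_mult_right: "scaleC c (x * y) = x * scaleC c y"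
    and cstar_add: "cstar (x + y) = cstar x + cstar y"
    and cstar_scaleC: "cstar (scaleC c x) = scaleC (cnj c) (cstar x)"
    and cstar_mult: "cstar (x * y) = cstar y * cstar x"
    and cstar_cstar: "cstar (cstar x) = x"
    and cstar_identity: "norm (cstar x * x) = (norm x)\<^sup>2"

definition sa :: "'a::cstar_algebra set" where
  "sa = {a. cstar a = a}"

definition is_state :: "('a::cstar_algebra \<Rightarrow> complex) \<Rightarrow> bool" where
  "is_state \<phi> \<longleftrightarrow>
     (\<forall>x y. \<phi> (x + y) = \<phi> x + \<phi> y) \<and>
     (\<forall>c x. \<phi> (scaleC c x) = c * \<phi> x) \<and>
     (\<forall>a. Im (\<phi> (cstar a * a)) = 0 \<and> Re (\<phi> (cstar a * a)) \<ge> 0) \<and>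
     \<phi> 1 = 1"

definition is_pure_state :: "('a::cstar_algebra \<Rightarrow> complex) \<Rightarrow> bool" where
  "is_pure_state \<phi> \<longleftrightarrow> is_state \<phi> \<and>
     (\<forall>\<psi>1 \<psi>2 t. is_state \<psi>1 \<and> is_state \<psi>2 \<and> 0 < t \<and> t < 1 \<and>
        \<phi> = (\<lambda>x. complex_of_real t * \<psi>1 x + complex_of_real (1 - t) * \<psi>2 x)
        \<longrightarrow> \<psi>1 = \<phi> \<and> \<psi>2 = \<phi>)"

text \<open>A seminorm on sa(A) with values in [0,\<infinity>] (only values on sa matter).\<close>
definition seminorm_sa :: "('a::cstar_algebra \<Rightarrow> ennreal) \<Rightarrow> bool" where
  "seminorm_sa L \<longleftrightarrow>
     (\<forall>a\<in>sa. \<forall>b\<in>sa. L (a + b) \<le> L a + L b) \<and>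
     (\<forall>a\<in>sa. \<forall>r::real. L (scaleR r a) = ennreal \<bar>r\<bar> * L a)"

definition mk :: "('a::cstar_algebra \<Rightarrow> ennreal) \<Rightarrow> ('a \<Rightarrow> complex) \<Rightarrow> ('a \<Rightarrow> complex) \<Rightarrow> ennreal" where
  "mk L \<phi> \<psi> = (SUP a \<in> {a \<in> sa. L a \<le> 1}. ennreal (cmod (\<phi> a - \<psi> a)))"

end

theory Submission
  imports Defs "HOL-Computational_Algebra.Formal_Power_Series"
begin

definition cface :: "('a \<Rightarrow> complex) set \<Rightarrow> ('a \<Rightarrow> complex) set \<Rightarrow> bool" where
 "cface K F \<longleftrightarrow> F \<subseteq> K \<and> (\<forall>\<psi>1 \<psi>2 t. \<psi>1 \<in> K \<and> \<psi>2 \<in> K \<and> 0 < t \<and> t < 1 \<and>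
    (\<lambda>x. complex_of_real t * \<psi>1 x + complex_of_real (1 - t) * \<psi>2 x) \<in> F \<longrightarrow> \<psi>1 \<in> F \<and> \<psi>2 \<in> F)"

lemma cfaceD:
  assumes "cface K F" "\<psi>1 \<in> K" "\<psi>2 \<in> K" "0 < t" "t < 1"
    "(\<lambda>x. complex_of_real t * \<psi>1 x + complex_of_real (1 - t) * \<psi>2 x) \<in> F"
  shows "\<psi>1 \<in> F \<and> \<psi>2 \<in> F"
proof -
  have "\<forall>\<psi>1 \<psi>2 t. \<psi>1 \<in> K \<and> \<psi>2 \<in> K \<and> 0 < t \<and> t < 1 \<and>
    (\<lambda>x. complex_of_real t * \<psi>1 x + complex_of_real (1 - t) * \<psi>2 x) \<in> F \<longrightarrow> \<psi>1 \<in> F \<and> \<psi>2 \<in> F"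
    using assms(1) unfolding cface_def by (rule conjunct2)
  then have "\<psi>1 \<in> K \<and> \<psi>2 \<in> K \<and> 0 < t \<and> t < 1 \<and>
    (\<lambda>x. complex_of_real t * \<psi>1 x + complex_of_real (1 - t) * \<psi>2 x) \<in> F \<longrightarrow> \<psi>1 \<in> F \<and> \<psi>2 \<in> F"
    by (elim allE)
  then show ?thesis using assms(2-6) by blast
qed
lemma cfaceI:
  assumes "F \<subseteq> K" "\<And>\<psi>1 \<psi>2 t. \<psi>1 \<in> K \<Longrightarrow> \<psi>2 \<in> K \<Longrightarrow> 0 < t \<Longrightarrow> t < 1 \<Longrightarrow>
    (\<lambda>x. complex_of_real t * \<psi>1 x + complex_of_real (1 - t) * \<psi>2 x) \<in> F \<Longrightarrow> \<psi>1 \<in> F \<and> \<psi>2 \<in> F"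
  shows "cface K F"
  unfolding cface_def using assms by blast

lemma cont_eval_on [continuous_intros]: "continuous_on S (\<lambda>\<phi>::'a \<Rightarrow> 'b::topological_space. \<phi> x)"
  by (rule continuous_on_subset[OF continuous_on_product_coordinates]) simp

lemma g_comb: "Re (c * (complex_of_real t * a + complex_of_real (1-t) * b)) = t * Re (c*a) + (1-t) * Re (c*b)"
  by (simp add: algebra_simps)

lemma conv_eq:
  fixes t u v m :: real
  assumes "0 < t" "t < 1" "t * u + (1-t) * v = m" "u \<le> m" "v \<le> m"
  shows "u = m \<and> v = m"
proof -
  have a: "t * (m - u) \<ge> 0" "(1 - t) * (m - v) \<ge> 0" using assms by simp_all
  have b: "t * (m - u) + (1 - t) * (m - v) = 0" using assms(3) by (simp add: algebra_simps)
  have "t * (m - u) = 0" "(1 - t) * (m - v) = 0" using a b by linarith+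
  then show ?thesis using assms(1,2) by simp
qed

lemma cface_argmax:
  fixes c :: complex
  assumes "cface K F" "compact K" "closed F" "F \<noteq> {}"
  shows "\<exists>m. cface K {\<phi>\<in>F. Re (c * \<phi> x) = m} \<and> closed {\<phi>\<in>F. Re (c * \<phi> x) = m}
     \<and> {\<phi>\<in>F. Re (c * \<phi> x) = m} \<noteq> {} \<and> (\<forall>\<phi>\<in>F. Re (c * \<phi> x) \<le> m)"
proof -
  have cont: "continuous_on S (\<lambda>\<phi>::'a \<Rightarrow> complex. Re (c * \<phi> x))" for S
    by (intro continuous_intros)
  have FK: "F \<subseteq> K" using assms(1) unfolding cface_def by blast
  have "compact (K \<inter> F)" using assms(2,3) by blast
  moreover have "K \<inter> F = F" using FK by blast
  ultimately have cF: "compact F" by simp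
  obtain p where p: "p \<in> F" "\<forall>\<phi>\<in>F. Re (c * \<phi> x) \<le> Re (c * p x)"
    using continuous_attains_sup[OF cF assms(4) cont] by blast
  define m where "m = Re (c * p x)"
  have cl: "closed {\<phi>::'a\<Rightarrow>complex. Re (c * \<phi> x) = m}"
    by (rule closed_Collect_eq) (intro continuous_intros)+
  have eq: "{\<phi>\<in>F. Re (c * \<phi> x) = m} = F \<inter> {\<phi>. Re (c * \<phi> x) = m}" by blast
  have "cface K {\<phi>\<in>F. Re (c * \<phi> x) = m}"
    unfolding cface_def
  proof (rule conjI)
    show "{\<phi> \<in> F. Re (c * \<phi> x) = m} \<subseteq> K" using FK by blast
  next
    show "\<forall>\<psi>1 \<psi>2 t. \<psi>1 \<in> K \<and> \<psi>2 \<in> K \<and> 0 < t \<and> t < 1 \<and>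
      (\<lambda>x. complex_of_real t * \<psi>1 x + complex_of_real (1 - t) * \<psi>2 x) \<in> {\<phi> \<in> F. Re (c * \<phi> x) = m} \<longrightarrow>
      \<psi>1 \<in> {\<phi> \<in> F. Re (c * \<phi> x) = m} \<and> \<psi>2 \<in> {\<phi> \<in> F. Re (c * \<phi> x) = m}"
    proof (intro allI impI)
    fix \<psi>1 \<psi>2 t assume h: "\<psi>1 \<in> K \<and> \<psi>2 \<in> K \<and> 0 < t \<and> t < 1 \<and>
      (\<lambda>x. complex_of_real t * \<psi>1 x + complex_of_real (1 - t) * \<psi>2 x) \<in> {\<phi> \<in> F. Re (c * \<phi> x) = m}"
    have hF: "(\<lambda>x. complex_of_real t * \<psi>1 x + complex_of_real (1 - t) * \<psi>2 x) \<in> F" using h by simp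
    have in1: "\<psi>1 \<in> F" and in2: "\<psi>2 \<in> F" using cfaceD[OF assms(1) _ _ _ _ hF] h by auto
    have "t * Re (c * \<psi>1 x) + (1-t) * Re (c * \<psi>2 x) = m"
      using h g_comb[of c t "\<psi>1 x" "\<psi>2 x"] by simp
    moreover have "Re (c * \<psi>1 x) \<le> m" "Re (c * \<psi>2 x) \<le> m" using p in1 in2 m_def by auto
    ultimately have "Re (c * \<psi>1 x) = m \<and> Re (c * \<psi>2 x) = m"
      using h conv_eq[of t "Re (c * \<psi>1 x)" "Re (c * \<psi>2 x)" m] by blast
    then show "\<psi>1 \<in> {\<phi> \<in> F. Re (c * \<phi> x) = m} \<and> \<psi>2 \<in> {\<phi> \<in> F. Re (c * \<phi> x) = m}"
      using in1 in2 by blast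
  qed
  qed
  moreover have "closed {\<phi>\<in>F. Re (c * \<phi> x) = m}" unfolding eq using assms(3) cl by (rule closed_Int)
  moreover have "{\<phi>\<in>F. Re (c * \<phi> x) = m} \<noteq> {}" using p m_def by auto
  moreover have "\<forall>\<phi>\<in>F. Re (c * \<phi> x) \<le> m" using p m_def by auto
  ultimately show ?thesis by blast
qed

lemma finite_chain_least:
  assumes "finite G" "G \<noteq> {}" "\<forall>a\<in>G. \<forall>b\<in>G. a \<subseteq> b \<or> b \<subseteq> a"
  shows "\<exists>g\<in>G. \<forall>h\<in>G. g \<subseteq> h"
  using assms
proof (induction G rule: finite_ne_induct)
  case (singleton x) then show ?case by blast
next
  case (insert x F)
  have chF: "\<forall>a\<in>F. \<forall>b\<in>F. a \<subseteq> b \<or> b \<subseteq> a" using insert.prems by blast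
  obtain g where g: "g \<in> F" "\<forall>h\<in>F. g \<subseteq> h" using insert.IH[OF chF] by blast
  show ?case
  proof (cases "x \<subseteq> g")
    case True
    have "\<forall>h\<in>insert x F. x \<subseteq> h"
    proof
      fix h assume "h \<in> insert x F"
      then show "x \<subseteq> h" using True g(2) by (metis insertE order_refl order_trans)
    qed
    then show ?thesis by blast
  next
    case False
    have "x \<subseteq> g \<or> g \<subseteq> x" using insert.prems g(1) by blast
    then have "g \<subseteq> x" using False by blast
    then have "\<forall>h\<in>insert x F. g \<subseteq> h" using g(2) by blast
    then show ?thesis using g(1) by blast
  qed
qed

lemma minimal_face:
  assumes K: "compact K" and F0: "cface K F0" "closed F0" "F0 \<noteq> {}"
  shows "\<exists>p\<in>F0. cface K {p}"
proof -
  define A where "A = {F. cface K F \<and> closed F \<and> F \<noteq> {} \<and> F \<subseteq> F0}"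
  have AD: "cface K F \<and> closed F \<and> F \<noteq> {} \<and> F \<subseteq> F0" if "F \<in> A" for F
    using that unfolding A_def by simp
  have fK: "F \<subseteq> K" if "cface K F" for F using that unfolding cface_def by simp
  have po: "partial_order_on A (relation_of (\<lambda>a b. b \<subseteq> a) A)"
    unfolding partial_order_on_def preorder_on_def refl_on_def trans_on_def antisym_on_def relation_of_def
    by auto
  have ch: "\<exists>u\<in>A. \<forall>a\<in>C. u \<subseteq> a" if C: "C \<in> Chains (relation_of (\<lambda>a b. b \<subseteq> a) A)" for C
  proof (cases "C = {}")
    case True then show ?thesis using F0 unfolding A_def by auto
  next
    case False
    have CA: "C \<subseteq> A" and chn: "\<forall>a\<in>C. \<forall>b\<in>C. a \<subseteq> b \<or> b \<subseteq> a"
      using C unfolding Chains_def relation_of_def by auto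
    have clC: "\<And>T. T \<in> C \<Longrightarrow> closed T" using CA AD by blast
    have "K \<inter> \<Inter>C \<noteq> {}"
    proof (rule compact_imp_fip[OF K clC])
      fix G assume G: "finite G" "G \<subseteq> C"
      show "K \<inter> \<Inter>G \<noteq> {}"
      proof (cases "G = {}")
        case True then show ?thesis using F0 unfolding cface_def by auto
      next
        case False
        then obtain g where g: "g \<in> G" "\<forall>h\<in>G. g \<subseteq> h"
          using finite_chain_least[OF G(1) False] chn G(2) by blast
        then have "g \<subseteq> \<Inter>G" by blast
        moreover have gA: "g \<in> A" using g G CA by blast
        moreover have "g \<subseteq> K" "g \<noteq> {}" using AD[OF gA] fK by auto
        ultimately show ?thesis by blast
      qed
    qed
    moreover obtain c0 where c0: "c0 \<in> C" using False by blast
    ultimately have ne: "\<Inter>C \<noteq> {}" by blast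
    have c0A: "c0 \<in> A" using c0 CA by blast
    have sub: "\<Inter>C \<subseteq> F0" "\<Inter>C \<subseteq> K" using c0 AD[OF c0A] fK by auto
    have "cface K (\<Inter>C)"
      unfolding cface_def
    proof (rule conjI)
      show "\<Inter>C \<subseteq> K" by (rule sub(2))
    next
      show "\<forall>\<psi>1 \<psi>2 t. \<psi>1 \<in> K \<and> \<psi>2 \<in> K \<and> 0 < t \<and> t < 1 \<and>
        (\<lambda>x. complex_of_real t * \<psi>1 x + complex_of_real (1 - t) * \<psi>2 x) \<in> \<Inter>C \<longrightarrow> \<psi>1 \<in> \<Inter>C \<and> \<psi>2 \<in> \<Inter>C"
      proof (intro allI impI)
      fix \<psi>1 \<psi>2 t assume h: "\<psi>1 \<in> K \<and> \<psi>2 \<in> K \<and> 0 < t \<and> t < 1 \<and>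
        (\<lambda>x. complex_of_real t * \<psi>1 x + complex_of_real (1 - t) * \<psi>2 x) \<in> \<Inter>C"
      have "\<psi>1 \<in> T \<and> \<psi>2 \<in> T" if "T \<in> C" for T
      proof -
        have "T \<in> A" using that CA by blast
        then have "cface K T" using AD by blast
        moreover have "(\<lambda>x. complex_of_real t * \<psi>1 x + complex_of_real (1 - t) * \<psi>2 x) \<in> T" using h that by blast
        ultimately show ?thesis using h cfaceD by blast
      qed
      then show "\<psi>1 \<in> \<Inter>C \<and> \<psi>2 \<in> \<Inter>C" by blast
    qed
    qed
    moreover have "closed (\<Inter>C)" using clC by blast
    ultimately have "\<Inter>C \<in> A" unfolding A_def by (intro CollectI conjI ne sub)
    then show ?thesis by blast
  qed
  obtain M where M: "M \<in> A" "\<forall>a\<in>A. a \<subseteq> M \<longrightarrow> a = M"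
    using predicate_Zorn[OF po ch] by blast
  then obtain p where p: "p \<in> M" using AD[OF M(1)] by blast
  have "M = {p}"
  proof (rule ccontr)
    assume "M \<noteq> {p}"
    then obtain q where q: "q \<in> M" "q \<noteq> p" using p by blast
    have "\<exists>x. q x \<noteq> p x" using q(2) by (auto simp: fun_eq_iff)
    then obtain x where "q x \<noteq> p x" by blast
    then have x: "p x \<noteq> q x" by simp
    obtain c :: complex where c: "Re (c * p x) \<noteq> Re (c * q x)"
    proof (cases "Re (p x) = Re (q x)")
      case True
      then have "Im (p x) \<noteq> Im (q x)" using x complex_eqI by blast
      then show ?thesis using that[of "-\<i>"] by simp
    next
      case False then show ?thesis using that[of 1] by simp
    qed
    have MA: "cface K M" "closed M" "M \<noteq> {}" "M \<subseteq> F0" using AD[OF M(1)] by auto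
    obtain m where m: "cface K {\<phi>\<in>M. Re (c * \<phi> x) = m}" "closed {\<phi>\<in>M. Re (c * \<phi> x) = m}"
      "{\<phi>\<in>M. Re (c * \<phi> x) = m} \<noteq> {}"
      using cface_argmax[OF MA(1) K MA(2,3)] by blast
    have sub: "{\<phi>\<in>M. Re (c * \<phi> x) = m} \<subseteq> M" "{\<phi>\<in>M. Re (c * \<phi> x) = m} \<subseteq> F0"
      using MA(4) by auto
    have "{\<phi>\<in>M. Re (c * \<phi> x) = m} \<in> A" unfolding A_def by (intro CollectI conjI m sub)
    then have eq: "{\<phi>\<in>M. Re (c * \<phi> x) = m} = M" using M(2) sub(1) by blast
    have "p \<in> {\<phi>\<in>M. Re (c * \<phi> x) = m}" using p by (subst eq)
    then have "Re (c * p x) = m" by simp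
    moreover have "q \<in> {\<phi>\<in>M. Re (c * \<phi> x) = m}" using q(1) by (subst eq)
    then have "Re (c * q x) = m" by simp
    ultimately show False using c by simp
  qed
  moreover have "cface K M" "M \<subseteq> F0" using AD[OF M(1)] by blast+
  ultimately have "cface K {p}" "p \<in> F0" using p by auto
  then show ?thesis by blast
qed


lemma scaleC_zero_right: "scaleC c (0::'a::cstar_algebra) = 0"
  using scaleC_add_right[of c "0::'a" 0] by simp

lemma scaleC_minus_right: "scaleC c (- x::'a::cstar_algebra) = - scaleC c x"
proof -
  have "scaleC c x + scaleC c (-x) = 0"
    using scaleC_add_right[of c x "-x"] scaleC_zero_right[of c] by (metis add.right_inverse)
  then show ?thesis by (metis add.inverse_unique)
qed

lemma scaleC_diff_right: "scaleC c (x - y::'a::cstar_algebra) = scaleC c x - scaleC c y"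
  using scaleC_add_right[of c x "-y"] scaleC_minus_right[of c y] by simp

lemma scaleC_minus_left: "scaleC (- c) (x::'a::cstar_algebra) = - scaleC c x"
proof -
  have "scaleC c x + scaleC (-c) x = scaleC 0 x"
    using scaleC_add_left[of c "-c" x] by simp
  also have "scaleC 0 x = (0::'a)"
    using scaleR_scaleC[of 0 x] by simp
  finally show ?thesis by (metis add.inverse_unique)
qed

lemma cstar_zero: "cstar (0::'a::cstar_algebra) = 0"
  using cstar_add[of "0::'a" 0] by simp

lemma cstar_minus: "cstar (- x::'a::cstar_algebra) = - cstar x"
proof -
  have "cstar x + cstar (-x) = 0"
    using cstar_add[of x "-x"] cstar_zero by (metis add.right_inverse)
  then show ?thesis by (metis add.inverse_unique)
qed

lemma cstar_diff: "cstar (x - y::'a::cstar_algebra) = cstar x - cstar y"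
  using cstar_add[of x "-y"] cstar_minus[of y] by simp

lemma cstar_one: "cstar (1::'a::cstar_algebra) = 1"
proof -
  have "cstar (cstar (1::'a) * 1) = cstar 1 * cstar (cstar 1)" by (rule cstar_mult)
  then show ?thesis by (simp add: cstar_cstar)
qed

lemma cstar_scaleR: "cstar (scaleR r (x::'a::cstar_algebra)) = scaleR r (cstar x)"
  by (simp add: scaleR_scaleC cstar_scaleC)

lemma cstar_power: "cstar ((x::'a::cstar_algebra) ^ n) = (cstar x) ^ n"
proof (induction n)
  case 0 then show ?case by (simp add: cstar_one)
next
  case (Suc n)
  have "cstar (x ^ Suc n) = cstar (x * x ^ n)" by simp
  also have "\<dots> = cstar (x ^ n) * cstar x" by (rule cstar_mult)
  also have "\<dots> = cstar x ^ Suc n" using Suc by (simp add: power_Suc2 power_commutes)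
  finally show ?case .
qed

lemma norm_le_cstar: "norm (x::'a::cstar_algebra) \<le> norm (cstar x)"
proof (cases "x = 0")
  case True then show ?thesis by simp
next
  case False
  then have pos: "norm x > 0" by simp
  have "norm x * norm x = norm (cstar x * x)" using cstar_identity[of x] by (simp add: power2_eq_square)
  also have "\<dots> \<le> norm (cstar x) * norm x" by (rule norm_mult_ineq)
  finally show ?thesis using pos by simp
qed

lemma norm_cstar: "norm (cstar (x::'a::cstar_algebra)) = norm x"
  using norm_le_cstar[of x] norm_le_cstar[of "cstar x"] by (simp add: cstar_cstar)

lemma bl_cstar: "bounded_linear (cstar :: 'a::cstar_algebra \<Rightarrow> 'a)"
  by (rule bounded_linear_intro[where K=1]) (simp_all add: cstar_add cstar_scaleR norm_cstar)

lemma sa_iff: "x \<in> sa \<longleftrightarrow> cstar x = x" by (simp add: sa_def)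

lemma state_add: "is_state \<phi> \<Longrightarrow> \<phi> (x + y) = \<phi> x + \<phi> y" by (simp add: is_state_def)
lemma state_scaleC: "is_state \<phi> \<Longrightarrow> \<phi> (scaleC c x) = c * \<phi> x" by (simp add: is_state_def)
lemma state_one: "is_state \<phi> \<Longrightarrow> \<phi> 1 = 1" by (simp add: is_state_def)
lemma state_pos: "is_state \<phi> \<Longrightarrow> Re (\<phi> (cstar b * b)) \<ge> 0" by (simp add: is_state_def)
lemma state_pos_Im: "is_state \<phi> \<Longrightarrow> Im (\<phi> (cstar b * b)) = 0" by (simp add: is_state_def)

lemma state_zero: "is_state \<phi> \<Longrightarrow> \<phi> 0 = 0"
  using state_add[of \<phi> 0 0] by simp

lemma state_minus: "is_state \<phi> \<Longrightarrow> \<phi> (- x) = - \<phi> x"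
  using state_add[of \<phi> x "-x"] state_zero[of \<phi>] by (simp add: eq_neg_iff_add_eq_0 add.commute)

lemma state_diff: "is_state \<phi> \<Longrightarrow> \<phi> (x - y) = \<phi> x - \<phi> y"
  using state_add[of \<phi> x "-y"] state_minus[of \<phi> y] by simp

lemma state_scaleR: "is_state \<phi> \<Longrightarrow> \<phi> (scaleR r x) = complex_of_real r * \<phi> x"
  by (simp add: scaleR_scaleC state_scaleC)

lemma state_sa_Im:
  assumes st: "is_state \<phi>" and a: "(a::'a::cstar_algebra) \<in> sa"
  shows "Im (\<phi> a) = 0"
proof -
  have ca: "cstar a = a" using a by (simp add: sa_iff)
  define X where "X = cstar (a + 1) * (a + 1)"
  define Y where "Y = cstar (a - 1) * (a - 1)"
  have X: "X = a * a + a + a + 1" unfolding X_def by (simp add: cstar_add ca cstar_one algebra_simps)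
  have Y: "Y = a * a - a - a + 1" unfolding Y_def by (simp add: cstar_diff ca cstar_one algebra_simps)
  have "X - Y = a + a + a + a" unfolding X Y by (simp add: algebra_simps)
  then have "\<phi> X - \<phi> Y = 4 * \<phi> a" using st by (simp add: state_diff[symmetric] state_add)
  moreover have "Im (\<phi> X) = 0" "Im (\<phi> Y) = 0" unfolding X_def Y_def using st state_pos_Im by auto
  ultimately have "Im (4 * \<phi> a) = 0" by (metis minus_complex.sel(2) diff_zero)
  then show ?thesis by simp
qed



lemma gb_half_bound: "\<bar>(1/2::real) gchoose n\<bar> \<le> 1"
proof (induction n)
  case 0 then show ?case by simp
next
  case (Suc n)
  have e: "real (Suc n) * ((1/2::real) gchoose Suc n) = (1/2 - real n) * ((1/2) gchoose n)"
    using gbinomial_mult_1[of "1/2::real" n] by (simp add: algebra_simps)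
  have h1: "\<bar>1/2 - real n\<bar> \<le> real (Suc n)" by simp
  have "real (Suc n) * \<bar>(1/2::real) gchoose Suc n\<bar> = \<bar>1/2 - real n\<bar> * \<bar>(1/2) gchoose n\<bar>"
    using arg_cong[OF e, of abs] by (simp add: abs_mult)
  also have "\<dots> \<le> real (Suc n) * 1"
    by (rule mult_mono[OF h1 Suc]) simp_all
  finally show ?case by (simp del: of_nat_Suc)
qed

lemma one_gchoose: "((1::real) gchoose k) = (if k \<le> 1 then 1 else 0)"
proof (cases "k \<le> 1")
  case True then have "k = 0 \<or> k = 1" by auto
  then show ?thesis by auto
next
  case False
  have "((1::real) gchoose k) = real (1 choose k)" using binomial_gbinomial[of 1 k] by (metis of_nat_1)
  moreover have "((1::nat) choose k) = 0" using False by (intro binomial_eq_0) simp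
  ultimately show ?thesis using False by simp
qed

lemma vander_half: "(\<Sum>i\<le>k. ((1/2::real) gchoose i) * ((1/2) gchoose (k - i))) = (if k \<le> 1 then 1 else 0)"
  using gbinomial_Vandermonde[of "1/2::real" "1/2" k] one_gchoose[of k] by (simp add: atLeast0AtMost)

lemma sa_sqrt:
  assumes y: "(y::'a::cstar_algebra) \<in> sa" and ny: "norm y < 1"
  shows "\<exists>b::'a. cstar b * b = 1 - y"
proof -
  define c where "c n = (1/2::real) gchoose n" for n
  define t where "t n = scaleR (c n) ((-y)^n)" for n
  have nt: "norm (t n) \<le> norm y ^ n" for n
  proof -
    have "norm (t n) = \<bar>c n\<bar> * norm ((-y)^n)" by (simp add: t_def)
    also have "\<dots> \<le> 1 * norm y ^ n"
      using gb_half_bound[of n] norm_power_ineq[of "-y" n] unfolding c_def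
      by (intro mult_mono) simp_all
    finally show ?thesis by simp
  qed
  have sg: "summable (\<lambda>n. norm y ^ n)" using ny by (intro summable_geometric) simp
  have st: "summable (\<lambda>n. norm (t n))"
    by (rule summable_comparison_test'[OF sg, of 0]) (simp add: nt)
  have st': "summable t" using st by (rule summable_norm_cancel)
  define b where "b = suminf t"
  have "b * b = (\<Sum>k. \<Sum>i\<le>k. t i * t (k - i))"
    unfolding b_def by (rule Cauchy_product[OF st st])
  also have "(\<lambda>k. \<Sum>i\<le>k. t i * t (k - i)) = (\<lambda>k. scaleR (if k \<le> 1 then 1 else 0) ((-y)^k))"
  proof
    fix k
    have "(\<Sum>i\<le>k. t i * t (k - i)) = (\<Sum>i\<le>k. scaleR (c i * c (k - i)) ((-y)^k))"
    proof (rule sum.cong)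
      fix i assume "i \<in> {..k}"
      then have "i + (k - i) = k" by simp
      then have "(-y)^i * (-y)^(k-i) = (-y)^k" by (metis power_add)
      then show "t i * t (k - i) = scaleR (c i * c (k - i)) ((-y)^k)"
        by (simp add: t_def)
    qed simp
    also have "\<dots> = scaleR (\<Sum>i\<le>k. c i * c (k - i)) ((-y)^k)"
      by (simp add: scaleR_sum_left)
    also have "\<dots> = scaleR (if k \<le> 1 then 1 else 0) ((-y)^k)"
      unfolding c_def vander_half ..
    finally show "(\<Sum>i\<le>k. t i * t (k - i)) = scaleR (if k \<le> 1 then 1 else 0) ((-y)^k)" .
  qed
  also have "(\<Sum>k. scaleR (if k \<le> 1 then 1 else 0) ((-y)^k)) = (\<Sum>k\<in>{0,1}. scaleR (if k \<le> 1 then 1 else 0) ((-y)^k))"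
    by (rule suminf_finite) auto
  also have "\<dots> = 1 - y" by simp
  finally have bb: "b * b = 1 - y" .
  have cy: "cstar (-y) = -y" using y by (simp add: sa_iff cstar_minus)
  have "cstar b = (\<Sum>n. cstar (t n))"
    unfolding b_def by (rule bounded_linear.suminf[OF bl_cstar st'])
  also have "(\<lambda>n. cstar (t n)) = t"
    by (rule ext) (simp add: t_def cstar_scaleR cstar_power cy)
  finally have "cstar b = b" unfolding b_def .
  then show ?thesis using bb by (intro exI[of _ b]) simp
qed



lemma state_Re_le:
  assumes st: "is_state \<phi>" and a: "(a::'a::cstar_algebra) \<in> sa"
  shows "Re (\<phi> a) \<le> 2 * norm a"
proof (cases "a = 0")
  case True then show ?thesis using state_zero[OF st] by simp
next
  case False
  then have na: "norm a > 0" by simp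
  define r where "r = 1 / (2 * norm a)"
  have r: "r > 0" using na by (simp add: r_def)
  define y where "y = scaleR r a"
  have ysa: "y \<in> sa" using a by (simp add: y_def sa_iff cstar_scaleR)
  have "norm y = 1/2" using na r by (simp add: y_def r_def)
  then obtain b where b: "cstar b * b = 1 - y" using sa_sqrt[OF ysa] by auto
  have "0 \<le> Re (\<phi> (1 - y))" using state_pos[OF st, of b] b by simp
  also have "Re (\<phi> (1 - y)) = 1 - r * Re (\<phi> a)"
    using st by (simp add: state_diff state_one y_def state_scaleR)
  finally have "r * Re (\<phi> a) \<le> 1" by simp
  then have "Re (\<phi> a) \<le> 1 / r" using r by (simp add: field_simps)
  then show ?thesis by (simp add: r_def)
qed

lemma state_cmod_sa:
  assumes st: "is_state \<phi>" and a: "(a::'a::cstar_algebra) \<in> sa"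
  shows "cmod (\<phi> a) \<le> 2 * norm a"
proof -
  have ma: "-a \<in> sa" using a by (simp add: sa_iff cstar_minus)
  have "cmod (\<phi> a) = \<bar>Re (\<phi> a)\<bar>" using state_sa_Im[OF st a] by (simp add: cmod_eq_Re)
  moreover have "Re (\<phi> a) \<le> 2 * norm a" by (rule state_Re_le[OF st a])
  moreover have "- Re (\<phi> a) \<le> 2 * norm a"
    using state_Re_le[OF st ma] by (simp add: state_minus[OF st])
  ultimately show ?thesis by simp
qed

definition Rb :: "'a::cstar_algebra \<Rightarrow> real" where
  "Rb x = 2 * norm (scaleR (1/2) (x + cstar x)) + 2 * norm (scaleC (-\<i>/2) (x - cstar x))"

lemma state_bound:
  assumes st: "is_state \<phi>"
  shows "cmod (\<phi> (x::'a::cstar_algebra)) \<le> Rb x"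
proof -
  define h where "h = scaleR (1/2) (x + cstar x)"
  define k where "k = scaleC (-\<i>/2) (x - cstar x)"
  have hsa: "h \<in> sa" by (simp add: h_def sa_iff cstar_scaleR cstar_add cstar_cstar add.commute)
  have "cstar k = scaleC (\<i>/2) (cstar x - x)"
    by (simp add: k_def cstar_scaleC cstar_diff cstar_cstar)
  also have "\<dots> = scaleC (\<i>/2) (- (x - cstar x))" by simp
  also have "\<dots> = - scaleC (\<i>/2) (x - cstar x)" by (rule scaleC_minus_right)
  also have "\<dots> = scaleC (-(\<i>/2)) (x - cstar x)" by (rule scaleC_minus_left[symmetric])
  also have "\<dots> = k" by (simp add: k_def)
  finally have ksa: "k \<in> sa" by (simp add: sa_iff)
  have "scaleC \<i> k = scaleC (complex_of_real (1/2)) (x - cstar x)"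
    by (simp add: k_def scaleC_scaleC)
  also have "\<dots> = scaleR (1/2) (x - cstar x)" by (simp add: scaleR_scaleC)
  finally have ik: "scaleC \<i> k = scaleR (1/2) (x - cstar x)" .
  have "h + scaleC \<i> k = scaleR (1/2) (x + cstar x) + scaleR (1/2) (x - cstar x)"
    by (simp add: h_def ik)
  also have "\<dots> = scaleR (1/2) x + scaleR (1/2) x" by (simp add: scaleR_add_right scaleR_diff_right)
  also have "\<dots> = scaleR (1/2 + 1/2) x" by (rule scaleR_add_left[symmetric])
  also have "\<dots> = x" by simp
  finally have xhk: "x = h + scaleC \<i> k" by simp
  have "\<phi> x = \<phi> h + \<i> * \<phi> k" using st by (subst xhk) (simp add: state_add state_scaleC)
  then have "cmod (\<phi> x) \<le> cmod (\<phi> h) + cmod (\<phi> k)"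
    by (metis norm_triangle_ineq norm_mult norm_ii mult_1)
  also have "\<dots> \<le> 2 * norm h + 2 * norm k"
    using state_cmod_sa[OF st hsa] state_cmod_sa[OF st ksa] by simp
  finally show ?thesis by (simp add: Rb_def h_def k_def)
qed

lemma closed_states: "closed {\<phi> :: 'a::cstar_algebra \<Rightarrow> complex. is_state \<phi>}"
  unfolding is_state_def
  by (intro closed_Collect_conj closed_Collect_all closed_Collect_eq closed_Collect_le;
      intro continuous_intros)

lemma compact_states: "compact {\<phi> :: 'a::cstar_algebra \<Rightarrow> complex. is_state \<phi>}"
proof -
  define P where "P = PiE (UNIV::'a set) (\<lambda>x. cball (0::complex) (Rb x))"
  have "compactin (product_topology (\<lambda>i. euclidean) UNIV) P"
    unfolding P_def compactin_PiE by simp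
  then have cP: "compact P" by (simp add: euclidean_product_topology)
  have "{\<phi>. is_state \<phi>} \<subseteq> P" unfolding P_def using state_bound by (auto simp: PiE_iff)
  then have "{\<phi> :: 'a \<Rightarrow> complex. is_state \<phi>} = P \<inter> {\<phi>. is_state \<phi>}" by blast
  then show ?thesis using compact_Int_closed[OF cP closed_states] by simp
qed



lemma pure_of_face:
  assumes "is_state p" "cface {\<phi>. is_state \<phi>} {p}"
  shows "is_pure_state p"
  unfolding is_pure_state_def
proof (rule conjI[OF assms(1)], intro allI impI)
  fix \<psi>1 \<psi>2 t
  assume h: "is_state \<psi>1 \<and> is_state \<psi>2 \<and> 0 < t \<and> t < 1 \<and>
    p = (\<lambda>x. complex_of_real t * \<psi>1 x + complex_of_real (1 - t) * \<psi>2 x)"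
  then have cm: "(\<lambda>x. complex_of_real t * \<psi>1 x + complex_of_real (1 - t) * \<psi>2 x) \<in> {p}" by simp
  have m1: "\<psi>1 \<in> {\<phi>. is_state \<phi>}" "\<psi>2 \<in> {\<phi>. is_state \<phi>}" and t: "0 < t" "t < 1" using h by simp_all
  have "\<psi>1 \<in> {p} \<and> \<psi>2 \<in> {p}" by (rule cfaceD[OF assms(2) m1 t cm])
  then show "\<psi>1 = p \<and> \<psi>2 = p" by simp
qed

lemma extreme_exists:
  assumes st: "is_state (\<mu>::'a::cstar_algebra \<Rightarrow> complex)"
  shows "\<exists>p. is_pure_state p \<and> Re (c * \<mu> x) \<le> Re (c * p x)"
proof -
  define K where "K = {\<phi>::'a \<Rightarrow> complex. is_state \<phi>}"
  have cK: "compact K" and clK: "closed K" unfolding K_def by (rule compact_states, rule closed_states)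
  have fK: "cface K K" by (rule cfaceI) auto
  have ne: "K \<noteq> {}" using st K_def by auto
  obtain m where m: "cface K {\<phi>\<in>K. Re (c * \<phi> x) = m}" "closed {\<phi>\<in>K. Re (c * \<phi> x) = m}"
    "{\<phi>\<in>K. Re (c * \<phi> x) = m} \<noteq> {}" "\<forall>\<phi>\<in>K. Re (c * \<phi> x) \<le> m"
    using cface_argmax[OF fK cK clK ne] by blast
  obtain p where p: "p \<in> {\<phi>\<in>K. Re (c * \<phi> x) = m}" "cface K {p}"
    using minimal_face[OF cK m(1,2,3)] by blast
  have "is_state p" using p(1) K_def by simp
  then have "is_pure_state p" using pure_of_face p(2) K_def by simp
  moreover have "Re (c * \<mu> x) \<le> Re (c * p x)" using m(4) p(1) st K_def by simp
  ultimately show ?thesis by blast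
qed

lemma key:
  assumes st: "is_state \<mu>" "is_state \<nu>" and a: "(a::'a::cstar_algebra) \<in> sa"
    and le: "Re (\<nu> a) \<le> Re (\<mu> a)"
  shows "\<exists>p q. is_pure_state p \<and> is_pure_state q \<and> cmod (\<mu> a - \<nu> a) \<le> cmod (p a - q a)"
proof -
  obtain p where p: "is_pure_state p" "Re (1 * \<mu> a) \<le> Re (1 * p a)"
    using extreme_exists[OF st(1)] by blast
  obtain q where q: "is_pure_state q" "Re (-1 * \<nu> a) \<le> Re (-1 * q a)"
    using extreme_exists[OF st(2)] by blast
  have sp: "is_state p" "is_state q" using p(1) q(1) by (simp_all add: is_pure_state_def)
  have "cmod (\<mu> a - \<nu> a) = \<bar>Re (\<mu> a - \<nu> a)\<bar>"
    using state_sa_Im[OF st(1) a] state_sa_Im[OF st(2) a] by (simp add: cmod_eq_Re)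
  also have "\<dots> = Re (\<mu> a) - Re (\<nu> a)" using le by simp
  also have "\<dots> \<le> Re (p a) - Re (q a)" using p(2) q(2) by simp
  also have "\<dots> \<le> cmod (p a - q a)"
    using abs_Re_le_cmod[of "p a - q a"] by simp
  finally show ?thesis using p(1) q(1) by blast
qed

theorem lemma2p9:
  fixes L :: "'a::cstar_algebra \<Rightarrow> ennreal" and D :: ennreal
  assumes "seminorm_sa L"
    and "sa \<subseteq> closure {a \<in> sa. L a < \<infinity>}"
    and "\<forall>\<mu> \<nu>. is_pure_state \<mu> \<and> is_pure_state \<nu> \<longrightarrow> mk L \<mu> \<nu> \<le> D"
  shows "\<forall>\<mu> \<nu>. is_state \<mu> \<and> is_state \<nu> \<longrightarrow> mk L \<mu> \<nu> \<le> D"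
proof (intro allI impI)
  fix \<mu> \<nu> :: "'a \<Rightarrow> complex"
  assume st: "is_state \<mu> \<and> is_state \<nu>"
  show "mk L \<mu> \<nu> \<le> D"
    unfolding mk_def
  proof (rule SUP_least)
    fix a assume aA: "a \<in> {a \<in> sa. L a \<le> 1}"
    then have a: "a \<in> sa" by simp
    have pq: "\<exists>p q. is_pure_state p \<and> is_pure_state q \<and> cmod (\<mu> a - \<nu> a) \<le> cmod (p a - q a)"
    proof (cases "Re (\<nu> a) \<le> Re (\<mu> a)")
      case True then show ?thesis using key[of \<mu> \<nu> a] st a by blast
    next
      case False
      then obtain p q where "is_pure_state p" "is_pure_state q" "cmod (\<nu> a - \<mu> a) \<le> cmod (p a - q a)"
        using key[of \<nu> \<mu> a] st a by force
      then show ?thesis by (metis norm_minus_commute)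
    qed
    then obtain p q where p: "is_pure_state p" "is_pure_state q" "cmod (\<mu> a - \<nu> a) \<le> cmod (p a - q a)"
      by blast
    have "ennreal (cmod (\<mu> a - \<nu> a)) \<le> ennreal (cmod (p a - q a))"
      using p(3) by (rule ennreal_leI)
    also have "\<dots> \<le> (SUP a \<in> {a \<in> sa. L a \<le> 1}. ennreal (cmod (p a - q a)))"
      using aA by (rule SUP_upper)
    also have "\<dots> = mk L p q" by (simp add: mk_def)
    also have "\<dots> \<le> D" using assms(3) p(1,2) by blast
    finally show "ennreal (cmod (\<mu> a - \<nu> a)) \<le> D" .
  qed
qed


end
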